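(* Let $c^1,\dots,c^n$ be a lattice basis of $\mathbb{Z}^n$, $K=\{x\in\mathbb{R}^n: c^ix\ge0,\ i=1,\dots,n\}$, and $\bar x\in K\cap\mathbb{Z}^n$. Then the recession cone of $Q(\bar x)$ is $K$, and $Q(\bar x)$ is a full-dimensional polyhedron. Moreover, if $\bar x\ne0$ and $\ell:=\ell(\bar x)$, the extreme points of $Q(\bar x)$ are precisely $v^1,\dots,v^\ell$, where $v^\ell=\bar x$ and, for $k=1,\dots,\ell-1$, $v^k$ is the unique point satisfying $c^iv^k=c^i\bar x$ for $i=1,\dots,k-1$, $c^kv^k=c^k\bar x+1$, and $c^iv^k=0$ for $i=k+1,\dots,n$.
   Context: A lattice basis of $\mathbb{Z}^n$ is a set of $n$ linearly independent vectors $c^1,\dots,c^n\in\mathbb{Z}^n$ such that every $v\in\mathbb{Z}^n$ equals $\sum_i\lambda_ic^i$ with all $\lambda_i\in\mathbb{Z}$. The associated lexicographic order: $x\prec y$ iff $x\ne y$ and $c^ix<c^iy$, where $i$ is the smallest index with $c^ix\ne c^iy$; $\preceq,\succeq$ as usual. $Q(\bar x):=\operatorname{conv}\{x\in K\cap\mathbb{Z}^n: x\succeq\bar x\}$. For $\bar x\in K\setminus\{0\}$, the leading index $\ell(\bar x)$ is the largest $i$ with $c^i\bar x>0$. *)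

theory Defs
  imports "HOL-Analysis.Analysis"
begin

text \<open>Points of R^n are vectors of type real^'n, n = CARD('n). The basis vectors
  c^1..c^n are indexed by the natural numbers 1..n; c^i x is the inner product.\<close>

definition int_vec :: "real^'n \<Rightarrow> bool" where
  "int_vec x \<longleftrightarrow> (\<forall>j. x $ j \<in> \<int>)"

definition lattice_basis :: "(nat \<Rightarrow> real^'n) \<Rightarrow> bool" where
  "lattice_basis c \<longleftrightarrow>
     (\<forall>i\<in>{1..CARD('n)}. int_vec (c i)) \<and>
     inj_on c {1..CARD('n)} \<and> independent (c ` {1..CARD('n)}) \<and>
     (\<forall>v. int_vec v \<longrightarrow>
        (\<exists>lam :: nat \<Rightarrow> int. v = (\<Sum>i=1..CARD('n). of_int (lam i) *\<^sub>R c i)))"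

definition lex_less :: "(nat \<Rightarrow> real^'n) \<Rightarrow> real^'n \<Rightarrow> real^'n \<Rightarrow> bool" where
  "lex_less c x y \<longleftrightarrow> x \<noteq> y \<and>
     (\<exists>i\<in>{1..CARD('n)}. (\<forall>j\<in>{1..<i}. c j \<bullet> x = c j \<bullet> y) \<and> c i \<bullet> x < c i \<bullet> y)"

definition lex_le :: "(nat \<Rightarrow> real^'n) \<Rightarrow> real^'n \<Rightarrow> real^'n \<Rightarrow> bool" where
  "lex_le c x y \<longleftrightarrow> x = y \<or> lex_less c x y"

definition coneK :: "(nat \<Rightarrow> real^'n) \<Rightarrow> (real^'n) set" where
  "coneK c = {x. \<forall>i\<in>{1..CARD('n)}. 0 \<le> c i \<bullet> x}"

definition Qset :: "(nat \<Rightarrow> real^'n) \<Rightarrow> real^'n \<Rightarrow> (real^'n) set" where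
  "Qset c xb = convex hull {x \<in> coneK c. int_vec x \<and> lex_le c xb x}"

definition lead_idx :: "(nat \<Rightarrow> real^'n) \<Rightarrow> real^'n \<Rightarrow> nat" where
  "lead_idx c x = Max {i\<in>{1..CARD('n)}. c i \<bullet> x > 0}"

definition rec_cone :: "('a::real_vector) set \<Rightarrow> 'a set" where
  "rec_cone P = {d. \<forall>x\<in>P. \<forall>t::real. t \<ge> 0 \<longrightarrow> x + t *\<^sub>R d \<in> P}"

end

theory Submission
  imports Defs
begin
lemma int_inner: "int_vec (a::real^'n) \<Longrightarrow> int_vec b \<Longrightarrow> a \<bullet> b \<in> \<int>"
  unfolding int_vec_def inner_vec_def by (auto intro!: Ints_sum Ints_mult)

lemma coord_expand:
  fixes c :: "nat \<Rightarrow> real^'n"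
  assumes "lattice_basis c"
  shows "\<exists>lam::nat\<Rightarrow>int. \<forall>x. x $ j = (\<Sum>i=1..CARD('n). of_int (lam i) * (c i \<bullet> x))"
proof -
  have "int_vec (axis j (1::real))" by (simp add: int_vec_def axis_def)
  then obtain lam :: "nat \<Rightarrow> int" where l: "axis j 1 = (\<Sum>i=1..CARD('n). of_int (lam i) *\<^sub>R c i)"
    using assms unfolding lattice_basis_def by blast
  have "x $ j = (\<Sum>i=1..CARD('n). of_int (lam i) * (c i \<bullet> x))" for x
  proof -
    have "x $ j = x \<bullet> axis j 1" by (simp add: inner_axis)
    also have "\<dots> = (\<Sum>i=1..CARD('n). of_int (lam i) * (c i \<bullet> x))"
      unfolding l by (simp add: inner_sum_right inner_commute)
    finally show ?thesis .
  qed
  then show ?thesis by blast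
qed

lemma inj_y:
  fixes c :: "nat \<Rightarrow> real^'n"
  assumes "lattice_basis c" "\<forall>i\<in>{1..CARD('n)}. c i \<bullet> x = c i \<bullet> z"
  shows "x = z"
unfolding vec_eq_iff
proof
  fix j
  obtain lam :: "nat \<Rightarrow> int" where l: "\<forall>x. x $ j = (\<Sum>i=1..CARD('n). of_int (lam i) * (c i \<bullet> x))"
    using coord_expand[OF assms(1)] by blast
  show "x $ j = z $ j" unfolding l[rule_format] using assms(2) by (intro sum.cong) auto
qed

lemma int_y:
  fixes c :: "nat \<Rightarrow> real^'n"
  assumes "lattice_basis c" "\<forall>i\<in>{1..CARD('n)}. c i \<bullet> x \<in> \<int>"
  shows "int_vec x"
  unfolding int_vec_def
proof
  fix j
  obtain lam :: "nat \<Rightarrow> int" where l: "\<forall>x. x $ j = (\<Sum>i=1..CARD('n). of_int (lam i) * (c i \<bullet> x))"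
    using coord_expand[OF assms(1)] by blast
  show "x $ j \<in> \<int>" unfolding l[rule_format] using assms(2) by (intro Ints_sum Ints_mult) auto
qed

lemma surj_y:
  fixes c :: "nat \<Rightarrow> real^'n"
  assumes "lattice_basis c"
  shows "\<exists>x. \<forall>i\<in>{1..CARD('n)}. c i \<bullet> x = a i"
proof -
  obtain h :: "'n \<Rightarrow> nat" where h: "bij_betw h UNIV {1..CARD('n)}"
    using finite_same_card_bij[of "UNIV::'n set" "{1..CARD('n)}"] by auto
  have hr: "h ` UNIV = {1..CARD('n)}" using h by (simp add: bij_betw_def)
  define T where "T = (\<lambda>x::real^'n. \<chi> j. c (h j) \<bullet> x)"
  have lin: "linear T" unfolding T_def
    by (auto intro!: linearI simp: vec_eq_iff inner_add_right)
  have "inj T"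
  proof (rule injI)
    fix x z assume "T x = T z"
    then have "\<forall>j. c (h j) \<bullet> x = c (h j) \<bullet> z" by (auto simp: T_def vec_eq_iff)
    then have hj: "\<forall>j. c (h j) \<bullet> x = c (h j) \<bullet> z" .
    have "\<forall>i\<in>{1..CARD('n)}. c i \<bullet> x = c i \<bullet> z"
    proof
      fix i assume "i \<in> {1..CARD('n)}"
      then have "i \<in> range h" using hr by simp
      then obtain j where "i = h j" by blast
      then show "c i \<bullet> x = c i \<bullet> z" using hj by simp
    qed
    then show "x = z" using inj_y[OF assms] by blast
  qed
  then have "surj T" using linear_injective_imp_surjective[OF lin] by simp
  define x where "x = inv T (\<chi> j. a (h j))"
  have x: "T x = (\<chi> j. a (h j))" unfolding x_def using \<open>surj T\<close> by (rule surj_f_inv_f)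
  have "c i \<bullet> x = a i" if "i \<in> {1..CARD('n)}" for i
  proof -
    have "i \<in> range h" using hr that by simp
    then obtain j where "i = h j" by blast
    then show ?thesis using x by (auto simp: T_def vec_eq_iff)
  qed
  then show ?thesis by blast
qed

lemma lex_less_iff:
  "lex_less c x y \<longleftrightarrow> (\<exists>i\<in>{1..CARD('n)}. (\<forall>j\<in>{1..<i}. c j \<bullet> x = c j \<bullet> y) \<and> c i \<bullet> x < c i \<bullet> (y::real^'n))"
  unfolding lex_less_def by auto

lemma lexge_step:
  fixes c :: "nat \<Rightarrow> real^'n"
  assumes "lex_le c xb s" "i \<in> {1..CARD('n)}" "\<forall>j\<in>{1..<i}. c j \<bullet> s = c j \<bullet> xb"
  shows "c i \<bullet> xb \<le> c i \<bullet> s"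
proof (cases "s = xb")
  case False
  then obtain m where m: "m \<in> {1..CARD('n)}" "\<forall>j\<in>{1..<m}. c j \<bullet> xb = c j \<bullet> s" "c m \<bullet> xb < c m \<bullet> s"
    using assms(1) unfolding lex_le_def lex_less_iff by auto
  show ?thesis
  proof (cases "m < i")
    case True then show ?thesis using m assms(3) by force
  next
    case False
    then have "m = i \<or> i < m" by auto
    then show ?thesis using m assms(2) by force
  qed
qed simp

lemma coneK_add: "x \<in> coneK c \<Longrightarrow> y \<in> coneK c \<Longrightarrow> x + y \<in> coneK c"
  unfolding coneK_def by (auto simp: inner_add_right)

lemma coneK_scale: "x \<in> coneK c \<Longrightarrow> 0 \<le> t \<Longrightarrow> t *\<^sub>R x \<in> coneK c"
  unfolding coneK_def by (auto simp: inner_scaleR_right)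

lemma coneK_0: "0 \<in> coneK c"
  unfolding coneK_def by auto

lemma convex_coneK: "convex (coneK c)"
  unfolding convex_def coneK_def
  by (auto simp: inner_add_right inner_scaleR_right intro!: add_nonneg_nonneg mult_nonneg_nonneg)

lemma int_vec_add: "int_vec x \<Longrightarrow> int_vec y \<Longrightarrow> int_vec (x + y)"
  unfolding int_vec_def by auto

context
  fixes c :: "nat \<Rightarrow> real^'n" and xb :: "real^'n"
  assumes lb: "lattice_basis c" and xbK: "xb \<in> coneK c" and xbi: "int_vec xb"
begin

lemma lex_le_add:
  assumes "lex_le c xb s" "d \<in> coneK c"
  shows "lex_le c xb (s + d)"
proof (cases "\<forall>i\<in>{1..CARD('n)}. c i \<bullet> d = 0")
  case True
  then have "d = 0" using inj_y[OF lb, of d 0] by simp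
  then show ?thesis using assms by simp
next
  case False
  define i0 where "i0 = (LEAST i. i \<in> {1..CARD('n)} \<and> c i \<bullet> d \<noteq> 0)"
  have ex: "\<exists>i. i \<in> {1..CARD('n)} \<and> c i \<bullet> d \<noteq> 0" using False by auto
  have i0: "i0 \<in> {1..CARD('n)}" "c i0 \<bullet> d \<noteq> 0"
    using LeastI_ex[OF ex] unfolding i0_def by auto
  have below: "c j \<bullet> d = 0" if "j \<in> {1..<i0}" for j
  proof (rule ccontr)
    assume "c j \<bullet> d \<noteq> 0"
    then have "i0 \<le> j" unfolding i0_def using that i0 by (intro Least_le) auto
    then show False using that by auto
  qed
  have "c i0 \<bullet> d \<ge> 0" using i0(1) assms(2) unfolding coneK_def by blast
  then have pos: "c i0 \<bullet> d > 0" using i0(2) by linarith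
  show ?thesis
  proof (cases "s = xb")
    case True
    have "\<forall>j\<in>{1..<i0}. c j \<bullet> xb = c j \<bullet> (s + d)" using below True by (simp add: inner_add_right)
    moreover have "c i0 \<bullet> xb < c i0 \<bullet> (s + d)" using pos True by (simp add: inner_add_right)
    ultimately have "lex_less c xb (s + d)" unfolding lex_less_iff using i0(1) by blast
    then show ?thesis by (simp add: lex_le_def)
  next
    case False
    then obtain m where m: "m \<in> {1..CARD('n)}" "\<forall>j\<in>{1..<m}. c j \<bullet> xb = c j \<bullet> s" "c m \<bullet> xb < c m \<bullet> s"
      using assms(1) unfolding lex_le_def lex_less_iff by blast
    have dm: "c m \<bullet> d \<ge> 0" using m(1) assms(2) unfolding coneK_def by blast
    show ?thesis
    proof (cases "m \<le> i0")
      case True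
      have "\<forall>j\<in>{1..<m}. c j \<bullet> xb = c j \<bullet> (s + d)"
      proof
        fix j assume j: "j \<in> {1..<m}"
        then have "c j \<bullet> d = 0" using below True by simp
        then show "c j \<bullet> xb = c j \<bullet> (s + d)" using m(2) j by (simp add: inner_add_right)
      qed
      moreover have "c m \<bullet> xb < c m \<bullet> (s + d)" using m(3) dm by (simp add: inner_add_right)
      ultimately have "lex_less c xb (s + d)" unfolding lex_less_iff using m(1) by blast
      then show ?thesis by (simp add: lex_le_def)
    next
      case False
      have "\<forall>j\<in>{1..<i0}. c j \<bullet> xb = c j \<bullet> (s + d)"
      proof
        fix j assume j: "j \<in> {1..<i0}"
        then have "c j \<bullet> d = 0" using below by simp
        moreover have "j \<in> {1..<m}" using j False by simp
        ultimately show "c j \<bullet> xb = c j \<bullet> (s + d)" using m(2) by (simp add: inner_add_right)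
      qed
      moreover have "c i0 \<bullet> xb = c i0 \<bullet> s" using m(2) False i0(1) by simp
      then have "c i0 \<bullet> xb < c i0 \<bullet> (s + d)" using pos by (simp add: inner_add_right)
      ultimately have "lex_less c xb (s + d)" unfolding lex_less_iff using i0(1) by blast
      then show ?thesis by (simp add: lex_le_def)
    qed
  qed
qed

definition Sset where "Sset = {x \<in> coneK c. int_vec x \<and> lex_le c xb x}"

lemma Q_eq: "Qset c xb = convex hull Sset"
  unfolding Qset_def Sset_def by simp

lemma xb_S: "xb \<in> Sset" unfolding Sset_def lex_le_def using xbK xbi by blast

lemma xb_Q: "xb \<in> Qset c xb" unfolding Q_eq by (rule hull_inc[OF xb_S])

lemma Q_sub_K: "Qset c xb \<subseteq> coneK c"
  unfolding Q_eq by (rule hull_minimal) (auto simp: Sset_def convex_coneK)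

lemma Q_trans:
  assumes "p \<in> Qset c xb" "int_vec a" "a \<in> coneK c"
  shows "p + a \<in> Qset c xb"
proof -
  have "(\<lambda>x. a + x) ` Sset \<subseteq> Sset"
    using assms(2,3) unfolding Sset_def
    by (auto simp: add.commute[of a] intro: coneK_add int_vec_add lex_le_add)
  then have "convex hull ((\<lambda>x. a + x) ` Sset) \<subseteq> convex hull Sset" by (rule hull_mono)
  then have "(\<lambda>x. a + x) ` (convex hull Sset) \<subseteq> convex hull Sset"
    by (simp add: convex_hull_translation)
  then show ?thesis using assms(1) unfolding Q_eq by (auto simp: add.commute)
qed

definition dl :: "nat \<Rightarrow> real^'n" where
  "dl i = (SOME x. \<forall>j\<in>{1..CARD('n)}. c j \<bullet> x = (if j = i then 1 else 0))"

lemma dl: "j \<in> {1..CARD('n)} \<Longrightarrow> c j \<bullet> dl i = (if j = i then 1 else 0)"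
proof -
  have "\<exists>x. \<forall>j\<in>{1..CARD('n)}. c j \<bullet> x = (if j = i then 1 else 0)"
    by (rule surj_y[OF lb])
  then show "j \<in> {1..CARD('n)} \<Longrightarrow> c j \<bullet> dl i = (if j = i then 1 else 0)"
    unfolding dl_def by (rule someI2_ex) auto
qed

lemma dl_int: "int_vec (dl i)"
  by (rule int_y[OF lb]) (simp add: dl)

lemma dl_K: "dl i \<in> coneK c"
  unfolding coneK_def by (simp add: dl)

lemma K_decomp: "d = (\<Sum>i\<in>{1..CARD('n)}. (c i \<bullet> d) *\<^sub>R dl i)"
proof (rule inj_y[OF lb], intro ballI)
  fix j assume j: "j \<in> {1..CARD('n)}"
  have "c j \<bullet> (\<Sum>i\<in>{1..CARD('n)}. (c i \<bullet> d) *\<^sub>R dl i) = (\<Sum>i\<in>{1..CARD('n)}. (c i \<bullet> d) * (if j = i then 1 else 0))"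
    by (simp add: inner_sum_right dl[OF j])
  also have "\<dots> = c j \<bullet> d" using j by (simp add: if_distrib sum.delta cong: if_cong)
  finally show "c j \<bullet> d = c j \<bullet> (\<Sum>i\<in>{1..CARD('n)}. (c i \<bullet> d) *\<^sub>R dl i)" by simp
qed

lemma Q_ray:
  assumes "p \<in> Qset c xb" "0 \<le> t"
  shows "p + t *\<^sub>R dl i \<in> Qset c xb"
proof -
  define N where "N = nat \<lceil>t\<rceil>"
  have tN: "t \<le> real N" unfolding N_def by linarith
  show ?thesis
  proof (cases "N = 0")
    case True
    then have "t = 0" using tN assms(2) by simp
    then show ?thesis using assms(1) by simp
  next
    case False
    then have Npos: "real N > 0" by simp
    have "of_int (int N) *\<^sub>R dl i \<in> coneK c" by (intro coneK_scale dl_K) simp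
    moreover have "int_vec (real N *\<^sub>R dl i)" using dl_int[of i] unfolding int_vec_def
      by (auto intro: Ints_mult)
    ultimately have q: "p + real N *\<^sub>R dl i \<in> Qset c xb"
      using Q_trans[OF assms(1)] by simp
    have cv: "convex (Qset c xb)" unfolding Q_eq by simp
    define u where "u = t / real N"
    have u: "0 \<le> u" "u \<le> 1" using tN Npos assms(2) by (auto simp: u_def)
    have "(1 - u) *\<^sub>R p + u *\<^sub>R (p + real N *\<^sub>R dl i) \<in> Qset c xb"
      using convexD_alt[OF cv assms(1) q u] by simp
    moreover have "(1 - u) *\<^sub>R p + u *\<^sub>R (p + real N *\<^sub>R dl i) = p + t *\<^sub>R dl i"
      using Npos by (simp add: u_def algebra_simps)
    ultimately show ?thesis by simp
  qed
qed

lemma Q_plusK: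
  assumes "p \<in> Qset c xb" "d \<in> coneK c"
  shows "p + d \<in> Qset c xb"
proof -
  have "\<forall>p\<in>Qset c xb. p + (\<Sum>i\<in>J. (c i \<bullet> d) *\<^sub>R dl i) \<in> Qset c xb" if "J \<subseteq> {1..CARD('n)}" for J
  proof -
    have "finite J" using that finite_subset by blast
    then show ?thesis using that
    proof (induction J rule: finite_induct)
      case empty then show ?case by simp
    next
      case (insert j J)
      show ?case
      proof
        fix p assume p: "p \<in> Qset c xb"
        have "p + (\<Sum>i\<in>J. (c i \<bullet> d) *\<^sub>R dl i) \<in> Qset c xb" using insert p by auto
        moreover have "0 \<le> c j \<bullet> d" using insert(4) assms(2) unfolding coneK_def by auto
        ultimately have "p + (\<Sum>i\<in>J. (c i \<bullet> d) *\<^sub>R dl i) + (c j \<bullet> d) *\<^sub>R dl j \<in> Qset c xb"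
          by (rule Q_ray)
        then show "p + (\<Sum>i\<in>insert j J. (c i \<bullet> d) *\<^sub>R dl i) \<in> Qset c xb"
          using insert(1,2) by (simp add: algebra_simps)
      qed
    qed
  qed
  from this[OF order_refl] assms(1)
  have "p + (\<Sum>i\<in>{1..CARD('n)}. (c i \<bullet> d) *\<^sub>R dl i) \<in> Qset c xb" by blast
  then show ?thesis by (simp only: K_decomp[of d, symmetric])
qed

end

lemma polyhedron_slice:
  fixes P :: "('a::euclidean_space \<times> real) set"
  assumes "polyhedron P"
  shows "polyhedron {x. (x, 1) \<in> P}"
proof -
  obtain F where F: "finite F" "P = \<Inter>F" "\<forall>h\<in>F. \<exists>a b. a \<noteq> 0 \<and> h = {x. a \<bullet> x \<le> b}"
    using assms unfolding polyhedron_def by blast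
  have eq: "{x. (x, 1) \<in> P} = \<Inter>((\<lambda>h. {x. (x, 1) \<in> h}) ` F)" unfolding F(2) by blast
  have "polyhedron {x. (x, 1::real) \<in> h}" if hF: "h \<in> F" for h
  proof -
    obtain a b where ab: "h = {x. a \<bullet> x \<le> b}" using F(3) hF by meson
    have "{x. (x, 1::real) \<in> h} = {x. fst a \<bullet> x \<le> b - snd a}"
      unfolding ab by (cases a) auto
    then show ?thesis by (simp add: polyhedron_halfspace_le)
  qed
  then show ?thesis unfolding eq using F(1) by (intro polyhedron_Inter) auto
qed

lemma convex_cone_hull_sum:
  assumes "finite A" "\<And>i. i \<in> A \<Longrightarrow> f i \<in> convex_cone hull G"
  shows "sum f A \<in> convex_cone hull G"
  using assms by (induction A rule: finite_induct)
     (auto simp: convex_cone_hull_contains_0 intro: convex_cone_hull_add)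

context
  fixes c :: "nat \<Rightarrow> real^'n" and xb :: "real^'n"
  assumes lb: "lattice_basis c" and xbK: "xb \<in> coneK c" and xbi: "int_vec xb"
begin

lemmas QplusK = Q_plusK[OF lb xbK xbi]
lemmas QsubK = Q_sub_K[OF lb xbK xbi]
lemmas xbQ = xb_Q[OF lb xbK xbi]
lemmas QEq = Q_eq[OF lb xbK xbi]
lemmas Kdec = K_decomp[OF lb xbK xbi]
lemmas dlK = dl_K[OF lb xbK xbi]

lemma rec_eq: "rec_cone (Qset c xb) = coneK c"
proof
  show "coneK c \<subseteq> rec_cone (Qset c xb)"
    unfolding rec_cone_def using QplusK coneK_scale by blast
next
  show "rec_cone (Qset c xb) \<subseteq> coneK c"
  proof
    fix d assume d: "d \<in> rec_cone (Qset c xb)"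
    show "d \<in> coneK c" unfolding coneK_def
    proof (intro CollectI ballI)
      fix i assume i: "i \<in> {1..CARD('n)}"
      show "0 \<le> c i \<bullet> d"
      proof (rule ccontr)
        assume neg: "\<not> 0 \<le> c i \<bullet> d"
        have xbi0: "0 \<le> c i \<bullet> xb" using xbK i unfolding coneK_def by blast
        define t where "t = (c i \<bullet> xb + 1) / (- (c i \<bullet> d))"
        have t0: "0 \<le> t" unfolding t_def using neg xbi0 by (intro divide_nonneg_pos) auto
        have "xb + t *\<^sub>R d \<in> Qset c xb" using d xbQ t0 unfolding rec_cone_def by blast
        then have "xb + t *\<^sub>R d \<in> coneK c" using QsubK by blast
        then have "0 \<le> c i \<bullet> (xb + t *\<^sub>R d)" using i unfolding coneK_def by blast
        moreover have "c i \<bullet> (xb + t *\<^sub>R d) = -1"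
        proof -
          have e1: "c i \<bullet> (xb + t *\<^sub>R d) = c i \<bullet> xb + t * (c i \<bullet> d)" by (simp add: inner_add_right)
          have e2: "t * (c i \<bullet> d) = - (c i \<bullet> xb + 1)" using neg unfolding t_def by simp
          show ?thesis using e1 e2 by simp
        qed
        ultimately show False by simp
      qed
    qed
  qed
qed

lemma aff_full: "aff_dim (Qset c xb) = int CARD('n)"
proof -
  obtain z where z: "\<forall>i\<in>{1..CARD('n)}. c i \<bullet> z = 1" using surj_y[OF lb, of "\<lambda>_. 1"] by blast
  define Op where "Op = \<Inter>((\<lambda>i. {x. c i \<bullet> x > c i \<bullet> xb}) ` {1..CARD('n)})"
  have "open Op" unfolding Op_def by (intro open_INT) (auto simp: open_halfspace_gt)
  moreover have "xb + z \<in> Op" unfolding Op_def using z by (simp add: inner_add_right)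
  ultimately have "aff_dim Op = DIM(real^'n)" by (intro aff_dim_open) auto
  moreover have "Op \<subseteq> Qset c xb"
  proof
    fix x assume "x \<in> Op"
    then have "x - xb \<in> coneK c" unfolding Op_def coneK_def by (auto simp: inner_diff_right less_imp_le)
    then have "xb + (x - xb) \<in> Qset c xb" using QplusK xbQ by blast
    then show "x \<in> Qset c xb" by simp
  qed
  ultimately have "DIM(real^'n) \<le> aff_dim (Qset c xb)" using aff_dim_subset by metis
  moreover have "aff_dim (Qset c xb) \<le> DIM(real^'n)" by (rule aff_dim_le_DIM)
  ultimately show ?thesis by simp
qed

lemma QV:
  assumes "\<forall>s\<in>Sset c xb. \<exists>v\<in>V. s - v \<in> coneK c" "x \<in> Qset c xb"
  shows "\<exists>p\<in>convex hull V. x - p \<in> coneK c"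
proof -
  define T where "T = {x. \<exists>p\<in>convex hull V. x - p \<in> coneK c}"
  have "convex T" unfolding convex_def
  proof (intro ballI allI impI)
    fix x y u v :: real
    fix x y assume "x \<in> T" "y \<in> T"
    fix u v :: real assume uv: "0 \<le> u" "0 \<le> v" "u + v = 1"
    obtain p where p: "p \<in> convex hull V" "x - p \<in> coneK c" using \<open>x \<in> T\<close> T_def by blast
    obtain q where q: "q \<in> convex hull V" "y - q \<in> coneK c" using \<open>y \<in> T\<close> T_def by blast
    have "u *\<^sub>R p + v *\<^sub>R q \<in> convex hull V"
      using convexD[OF convex_convex_hull p(1) q(1) uv] .
    moreover have "(u *\<^sub>R x + v *\<^sub>R y) - (u *\<^sub>R p + v *\<^sub>R q) = u *\<^sub>R (x - p) + v *\<^sub>R (y - q)"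
      by (simp add: algebra_simps)
    moreover have "u *\<^sub>R (x - p) + v *\<^sub>R (y - q) \<in> coneK c"
      using p(2) q(2) uv by (intro coneK_add coneK_scale) auto
    ultimately show "u *\<^sub>R x + v *\<^sub>R y \<in> T" unfolding T_def by (metis (no_types, lifting) mem_Collect_eq)
  qed
  moreover have "Sset c xb \<subseteq> T"
  proof
    fix s assume "s \<in> Sset c xb"
    then obtain v where "v \<in> V" "s - v \<in> coneK c" using assms(1) by blast
    moreover have "v \<in> convex hull V" using \<open>v \<in> V\<close> by (rule hull_inc)
    ultimately show "s \<in> T" unfolding T_def by blast
  qed
  ultimately have "convex hull (Sset c xb) \<subseteq> T" by (rule hull_minimal[rotated])
  then show ?thesis using assms(2) unfolding QEq T_def by blast
qed

lemma poly:
  assumes "finite V" "V \<subseteq> Qset c xb" "\<forall>s\<in>Sset c xb. \<exists>v\<in>V. s - v \<in> coneK c"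
  shows "polyhedron (Qset c xb)"
proof -
  define G where "G = (\<lambda>v. (v, 1::real)) ` V \<union> (\<lambda>i. (dl c i, 0)) ` {1..CARD('n)}"
  define CC where "CC = convex_cone hull G"
  have "finite G" unfolding G_def using assms(1) by simp
  then have pCC: "polyhedron CC" unfolding CC_def by (rule polyhedron_convex_cone_hull)
  have "Qset c xb = {x. (x, 1) \<in> CC}"
  proof
    show "Qset c xb \<subseteq> {x. (x, 1) \<in> CC}"
    proof
      fix x assume "x \<in> Qset c xb"
      then obtain p where p: "p \<in> convex hull V" "x - p \<in> coneK c" using QV assms(3) by blast
      define d where "d = x - p"
      have "convex {p. (p, 1::real) \<in> CC}" unfolding convex_def
      proof (intro ballI allI impI)
        fix p q assume "p \<in> {p. (p, 1::real) \<in> CC}" "q \<in> {p. (p, 1::real) \<in> CC}"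
        fix u v :: real assume uv: "0 \<le> u" "0 \<le> v" "u + v = 1"
        have "(p, 1::real) \<in> convex_cone hull G" "(q, 1::real) \<in> convex_cone hull G"
          using \<open>p \<in> _\<close> \<open>q \<in> _\<close> unfolding CC_def by auto
        then have "u *\<^sub>R (p, 1::real) + v *\<^sub>R (q, 1) \<in> CC"
          unfolding CC_def by (rule convexD[OF convex_convex_cone_hull _ _ uv])
        then show "u *\<^sub>R p + v *\<^sub>R q \<in> {p. (p, 1) \<in> CC}" using uv by simp
      qed
      moreover have "V \<subseteq> {p. (p, 1::real) \<in> CC}"
        unfolding CC_def G_def by (auto intro: hull_inc)
      ultimately have "convex hull V \<subseteq> {p. (p, 1::real) \<in> CC}" by (rule hull_minimal[rotated])
      then have p1: "(p, 1) \<in> CC" using p(1) by blast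
      have "(\<Sum>i\<in>{1..CARD('n)}. (c i \<bullet> d) *\<^sub>R (dl c i, 0::real)) \<in> CC"
        unfolding CC_def
      proof (rule convex_cone_hull_sum)
        fix i assume i: "i \<in> {1..CARD('n)}"
        have "(dl c i, 0::real) \<in> convex_cone hull G" unfolding G_def using i by (auto intro: hull_inc)
        moreover have "0 \<le> c i \<bullet> d" using p(2) i unfolding d_def coneK_def by blast
        ultimately show "(c i \<bullet> d) *\<^sub>R (dl c i, 0::real) \<in> convex_cone hull G"
          by (rule convex_cone_hull_mul)
      qed simp
      moreover have "(\<Sum>i\<in>{1..CARD('n)}. (c i \<bullet> d) *\<^sub>R (dl c i, 0::real)) = (d, 0)"
      proof -
        have "(\<Sum>i\<in>{1..CARD('n)}. (c i \<bullet> d) *\<^sub>R (dl c i, 0::real))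
            = ((\<Sum>i\<in>{1..CARD('n)}. (c i \<bullet> d) *\<^sub>R dl c i), 0)"
          by (simp add: prod_eq_iff fst_sum snd_sum)
        also have "\<dots> = (d, 0)" by (simp only: Kdec[of d, symmetric])
        finally show ?thesis .
      qed
      ultimately have "(d, 0) \<in> CC" by simp
      then have "(p, 1) + (d, 0) \<in> CC" using p1 unfolding CC_def by (rule convex_cone_hull_add[rotated])
      then show "x \<in> {x. (x, 1) \<in> CC}" unfolding d_def by simp
    qed
  next
    define H where "H = {(z, t). 0 \<le> t \<and> (\<exists>q\<in>Qset c xb. \<exists>d\<in>coneK c. z = t *\<^sub>R q + d)}"
    have cvQ: "convex (Qset c xb)" unfolding QEq by simp
    have "convex_cone H" unfolding convex_cone_iff
    proof (intro conjI ballI allI impI)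
      have "(0::real^'n, 0::real) \<in> H" unfolding H_def using xbQ coneK_0[of c] by force
      then show "0 \<in> H" by (simp add: zero_prod_def)
    next
      fix a b assume "a \<in> H" "b \<in> H"
      then obtain z1 t1 q1 d1 z2 t2 q2 d2 where
        a: "a = (z1, t1)" "0 \<le> t1" "q1 \<in> Qset c xb" "d1 \<in> coneK c" "z1 = t1 *\<^sub>R q1 + d1" and
        b: "b = (z2, t2)" "0 \<le> t2" "q2 \<in> Qset c xb" "d2 \<in> coneK c" "z2 = t2 *\<^sub>R q2 + d2"
        unfolding H_def by blast
      have dd: "d1 + d2 \<in> coneK c" using a b by (intro coneK_add)
      show "a + b \<in> H"
      proof (cases "t1 + t2 = 0")
        case True
        then have "t1 = 0" "t2 = 0" using a b by auto
        then show ?thesis unfolding H_def using a b dd by force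
      next
        case False
        then have tp: "t1 + t2 > 0" using a b by auto
        define q where "q = (t1 / (t1 + t2)) *\<^sub>R q1 + (t2 / (t1 + t2)) *\<^sub>R q2"
        have qQ: "q \<in> Qset c xb" unfolding q_def
          using a b tp by (intro convexD[OF cvQ]) (auto simp: divide_simps)
        have eq: "(t1 + t2) *\<^sub>R q = t1 *\<^sub>R q1 + t2 *\<^sub>R q2"
          using tp by (simp add: q_def scaleR_add_right)
        have ab: "a + b = ((t1 + t2) *\<^sub>R q + (d1 + d2), t1 + t2)"
          using a b eq by (simp add: algebra_simps)
        have "\<exists>q'\<in>Qset c xb. \<exists>d\<in>coneK c. (t1 + t2) *\<^sub>R q + (d1 + d2) = (t1 + t2) *\<^sub>R q' + d"
          using qQ dd by blast
        then have "((t1 + t2) *\<^sub>R q + (d1 + d2), t1 + t2) \<in> H" unfolding H_def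
          using tp by simp
        then show ?thesis using ab by simp
      qed
    next
      fix a :: "(real^'n) \<times> real" and s :: real assume "a \<in> H" "0 \<le> s"
      then obtain z t q d where
        a: "a = (z, t)" "0 \<le> t" "q \<in> Qset c xb" "d \<in> coneK c" "z = t *\<^sub>R q + d"
        unfolding H_def by blast
      have "s *\<^sub>R d \<in> coneK c" using a \<open>0 \<le> s\<close> by (intro coneK_scale)
      then show "s *\<^sub>R a \<in> H" unfolding H_def using a \<open>0 \<le> s\<close>
        by (auto intro!: exI[of _ q] exI[of _ "s *\<^sub>R d"] simp: algebra_simps)
    qed
    moreover have "G \<subseteq> H"
    proof
      fix g assume "g \<in> G"
      then consider v where "v \<in> V" "g = (v, 1)" | i where "i \<in> {1..CARD('n)}" "g = (dl c i, 0)"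
        unfolding G_def by blast
      then show "g \<in> H"
      proof cases
        case 1 then show ?thesis unfolding H_def using assms(2) coneK_0 by force
      next
        case 2 then show ?thesis unfolding H_def using xbQ dlK by force
      qed
    qed
    ultimately have "CC \<subseteq> H" unfolding CC_def by (rule hull_minimal[rotated])
    then show "{x. (x, 1) \<in> CC} \<subseteq> Qset c xb"
      unfolding H_def using QplusK by auto
  qed
  then show ?thesis using polyhedron_slice[OF pCC] by simp
qed

lemma ext_sub:
  assumes "V \<subseteq> Qset c xb" "\<forall>s\<in>Sset c xb. \<exists>v\<in>V. s - v \<in> coneK c"
    and x: "x extreme_point_of (Qset c xb)"
  shows "x \<in> V"
proof -
  have xQ: "x \<in> Qset c xb" using x by (simp add: extreme_point_of_def)
  then obtain p where p: "p \<in> convex hull V" "x - p \<in> coneK c" using QV assms(2) by blast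
  have cvQ: "convex (Qset c xb)" unfolding QEq by simp
  have pQ: "p \<in> Qset c xb" using p(1) hull_minimal[of V "Qset c xb" convex, OF assms(1) cvQ] by blast
  have "x = p"
  proof (rule ccontr)
    assume "x \<noteq> p"
    define d where "d = x - p"
    have "d \<noteq> 0" using \<open>x \<noteq> p\<close> d_def by simp
    have "p + 2 *\<^sub>R d \<in> Qset c xb" using pQ p(2) unfolding d_def
      by (intro QplusK coneK_scale) auto
    moreover have "x = midpoint p (p + 2 *\<^sub>R d)"
    proof -
      have "p + (p + 2 *\<^sub>R d) = 2 *\<^sub>R (p + d)" by (simp add: scaleR_2 add_ac)
      then have "midpoint p (p + 2 *\<^sub>R d) = p + d" unfolding midpoint_def by simp
      then show ?thesis unfolding d_def by simp
    qed
    moreover have "p \<noteq> p + 2 *\<^sub>R d" using \<open>d \<noteq> 0\<close> by simp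
    ultimately show False using x pQ unfolding extreme_point_of_def
      by (metis midpoint_in_open_segment)
  qed
  then have "x extreme_point_of convex hull V"
    using x p(1) hull_minimal[of V "Qset c xb" convex, OF assms(1) cvQ] unfolding extreme_point_of_def by blast
  then show ?thesis by (rule extreme_point_of_convex_hull)
qed

end

lemma int_lt: "a \<in> \<int> \<Longrightarrow> b \<in> \<int> \<Longrightarrow> a < b \<Longrightarrow> a + 1 \<le> (b::real)"
  by (elim Ints_cases) simp

lemma lex_extreme:
  fixes F :: "nat \<Rightarrow> 'a::real_inner" and S :: "'a set"
  assumes vS: "v \<in> convex hull S"
    and lp: "\<forall>s\<in>S. s \<noteq> v \<longrightarrow> (\<exists>i\<in>{1..m}. (\<forall>j\<in>{1..<i}. F j \<bullet> (s - v) = 0) \<and> F i \<bullet> (s - v) > 0)"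
  shows "v extreme_point_of convex hull S"
proof -
  define LP where "LP d \<longleftrightarrow> (\<exists>i\<in>{1..m}. (\<forall>j\<in>{1..<i}. F j \<bullet> d = 0) \<and> F i \<bullet> d > 0)" for d
  have sc: "LP (t *\<^sub>R d)" if "LP d" "t > 0" for d t
    using that unfolding LP_def by (auto simp: inner_scaleR_right)
  have ad: "LP (d1 + d2)" if h1: "LP d1" and h2: "LP d2" for d1 d2
  proof -
    obtain i1 where i1: "i1 \<in> {1..m}" "\<forall>j\<in>{1..<i1}. F j \<bullet> d1 = 0" "F i1 \<bullet> d1 > 0"
      using h1 unfolding LP_def by blast
    obtain i2 where i2: "i2 \<in> {1..m}" "\<forall>j\<in>{1..<i2}. F j \<bullet> d2 = 0" "F i2 \<bullet> d2 > 0"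
      using h2 unfolding LP_def by blast
    show ?thesis
    proof (cases "i1 \<le> i2")
      case True
      have "\<forall>j\<in>{1..<i1}. F j \<bullet> (d1 + d2) = 0" using i1 i2 True by (auto simp: inner_add_right)
      moreover have "F i1 \<bullet> (d1 + d2) > 0"
      proof (cases "i1 = i2")
        case True then show ?thesis using i1 i2 by (simp add: inner_add_right)
      next
        case False
        then have "F i1 \<bullet> d2 = 0" using i2(2) i1(1) \<open>i1 \<le> i2\<close> by simp
        then show ?thesis using i1 by (simp add: inner_add_right)
      qed
      ultimately show ?thesis unfolding LP_def using i1(1) by blast
    next
      case False
      have "\<forall>j\<in>{1..<i2}. F j \<bullet> (d1 + d2) = 0" using i1 i2 False by (auto simp: inner_add_right)
      moreover have "F i2 \<bullet> (d1 + d2) > 0"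
      proof -
        have "F i2 \<bullet> d1 = 0" using i1(2) i2(1) False by simp
        then show ?thesis using i2 by (simp add: inner_add_right)
      qed
      ultimately show ?thesis unfolding LP_def using i2(1) by blast
    qed
  qed
  have n0: "\<not> LP 0" unfolding LP_def by simp
  define P where "P = {x. x = v \<or> LP (x - v)}"
  have "convex P" unfolding convex_def
  proof (intro ballI allI impI)
    fix x y assume x: "x \<in> P" and y: "y \<in> P"
    fix u w :: real assume uw: "0 \<le> u" "0 \<le> w" "u + w = 1"
    have eq: "u *\<^sub>R x + w *\<^sub>R y - v = u *\<^sub>R (x - v) + w *\<^sub>R (y - v)"
      using uw by (simp add: algebra_simps flip: scaleR_add_left)
    show "u *\<^sub>R x + w *\<^sub>R y \<in> P"
    proof (cases "u = 0")
      case True then show ?thesis using uw y by simp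
    next
      case u: False
      show ?thesis
      proof (cases "w = 0")
        case True then show ?thesis using uw x by simp
      next
        case w: False
        have up: "u > 0" "w > 0" using u w uw by auto
        show ?thesis
        proof (cases "x = v")
          case True
          show ?thesis
          proof (cases "y = v")
            case True then show ?thesis using \<open>x = v\<close> uw by (simp add: P_def flip: scaleR_add_left)
          next
            case False
            then have "LP (y - v)" using y P_def by simp
            then have "LP (w *\<^sub>R (y - v))" using up by (intro sc) auto
            then show ?thesis unfolding P_def using eq \<open>x = v\<close> by simp
          qed
        next
          case False
          then have lx: "LP (u *\<^sub>R (x - v))" using x P_def up by (intro sc) auto
          show ?thesis
          proof (cases "y = v")
            case True then show ?thesis unfolding P_def using eq lx by simp
          next
            case False
            then have "LP (w *\<^sub>R (y - v))" using y P_def up by (intro sc) auto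
            then show ?thesis unfolding P_def using eq lx ad by simp
          qed
        qed
      qed
    qed
  qed
  moreover have "S \<subseteq> P" using lp unfolding P_def LP_def by auto
  ultimately have hP: "convex hull S \<subseteq> P" by (rule hull_minimal[rotated])
  show ?thesis unfolding extreme_point_of_def
  proof (intro conjI ballI vS notI)
    fix a b assume a: "a \<in> convex hull S" and b: "b \<in> convex hull S" and vab: "v \<in> open_segment a b"
    then obtain u where u: "a \<noteq> b" "0 < u" "u < 1" "v = (1 - u) *\<^sub>R a + u *\<^sub>R b"
      unfolding in_segment by blast
    have zero: "(1 - u) *\<^sub>R (a - v) + u *\<^sub>R (b - v) = 0"
      using u(4) by (simp add: algebra_simps)
    have "a \<noteq> v"
    proof
      assume "a = v"
      then have "u *\<^sub>R (b - v) = 0" using zero by simp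
      then have "b = v" using u(2) by simp
      then show False using \<open>a = v\<close> u(1) by simp
    qed
    have "b \<noteq> v"
    proof
      assume "b = v"
      then have "(1 - u) *\<^sub>R (a - v) = 0" using zero by simp
      then have "a = v" using u(3) by simp
      then show False using \<open>b = v\<close> u(1) by simp
    qed
    have "LP (a - v)" "LP (b - v)" using hP a b \<open>a \<noteq> v\<close> \<open>b \<noteq> v\<close> unfolding P_def by auto
    then have "LP ((1 - u) *\<^sub>R (a - v) + u *\<^sub>R (b - v))" using u by (intro ad sc) auto
    then show False using zero n0 by simp
  qed
qed

context
  fixes c :: "nat \<Rightarrow> real^'n" and xb :: "real^'n"
  assumes lb: "lattice_basis c" and xbK: "xb \<in> coneK c" and xbi: "int_vec xb" and xb0: "xb \<noteq> 0"
begin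

lemmas QEq' = Q_eq[OF lb xbK xbi]
lemmas xbS' = xb_S[OF lb xbK xbi]
lemmas SsetD = Sset_def[OF lb xbK xbi]

lemma c_int: "i \<in> {1..CARD('n)} \<Longrightarrow> int_vec (c i)"
  using lb unfolding lattice_basis_def by blast

lemma cxb_int: "i \<in> {1..CARD('n)} \<Longrightarrow> c i \<bullet> xb \<in> \<int>"
  using int_inner[OF c_int xbi] .

lemma cxb_nn: "i \<in> {1..CARD('n)} \<Longrightarrow> 0 \<le> c i \<bullet> xb"
  using xbK unfolding coneK_def by blast

lemma lead:
  shows "lead_idx c xb \<in> {1..CARD('n)}" "c (lead_idx c xb) \<bullet> xb > 0"
    "\<And>j. j \<in> {1..CARD('n)} \<Longrightarrow> lead_idx c xb < j \<Longrightarrow> c j \<bullet> xb = 0"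
proof -
  define A where "A = {i\<in>{1..CARD('n)}. c i \<bullet> xb > 0}"
  have "A \<noteq> {}"
  proof
    assume "A = {}"
    then have "\<forall>i\<in>{1..CARD('n)}. c i \<bullet> xb = c i \<bullet> 0"
      using cxb_nn unfolding A_def by force
    then have "xb = 0" by (rule inj_y[OF lb])
    then show False using xb0 by simp
  qed
  moreover have "finite A" unfolding A_def by simp
  ultimately have "Max A \<in> A" by (intro Max_in)
  then show "lead_idx c xb \<in> {1..CARD('n)}" "c (lead_idx c xb) \<bullet> xb > 0"
    unfolding lead_idx_def A_def by auto
  fix j assume j: "j \<in> {1..CARD('n)}" "lead_idx c xb < j"
  show "c j \<bullet> xb = 0"
  proof (rule ccontr)
    assume "c j \<bullet> xb \<noteq> 0"
    moreover have "0 \<le> c j \<bullet> xb" using cxb_nn j(1) by blast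
    ultimately have "j \<in> A" using j unfolding A_def by simp
    then have "j \<le> Max A" using \<open>finite A\<close> by (rule Max_ge[rotated])
    then show False using j unfolding lead_idx_def A_def by simp
  qed
qed

definition Pk where "Pk k v \<longleftrightarrow> (\<forall>i\<in>{1..<k}. c i \<bullet> v = c i \<bullet> xb) \<and> c k \<bullet> v = c k \<bullet> xb + 1
                \<and> (\<forall>i\<in>{k<..CARD('n)}. c i \<bullet> v = 0)"

lemma Pk_ex1: "k \<in> {1..CARD('n)} \<Longrightarrow> \<exists>!v. Pk k v"
proof -
  assume k: "k \<in> {1..CARD('n)}"
  obtain v where v: "\<forall>i\<in>{1..CARD('n)}. c i \<bullet> v = (if i < k then c i \<bullet> xb else if i = k then c k \<bullet> xb + 1 else 0)"
    using surj_y[OF lb, of "\<lambda>i. if i < k then c i \<bullet> xb else if i = k then c k \<bullet> xb + 1 else 0"] by blast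
  have "Pk k v" unfolding Pk_def using v k by auto
  moreover have "w = v" if "Pk k w" for w
  proof (rule inj_y[OF lb], intro ballI)
    fix i assume i: "i \<in> {1..CARD('n)}"
    consider "i < k" | "i = k" | "k < i" by linarith
    then show "c i \<bullet> w = c i \<bullet> v" using that v i unfolding Pk_def by cases auto
  qed
  ultimately show ?thesis by blast
qed

lemma Pk_S:
  assumes k: "k \<in> {1..CARD('n)}" and v: "Pk k v"
  shows "v \<in> Sset c xb"
proof -
  have vals: "c i \<bullet> v = (if i < k then c i \<bullet> xb else if i = k then c k \<bullet> xb + 1 else 0)"
    if "i \<in> {1..CARD('n)}" for i
    using v that unfolding Pk_def by auto
  have "v \<in> coneK c" unfolding coneK_def
  proof (intro CollectI ballI)
    fix i assume i: "i \<in> {1..CARD('n)}"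
    show "0 \<le> c i \<bullet> v" using vals[OF i] cxb_nn[OF i] cxb_nn[OF k] by auto
  qed
  moreover have "int_vec v"
  proof (rule int_y[OF lb], intro ballI)
    fix i assume i: "i \<in> {1..CARD('n)}"
    show "c i \<bullet> v \<in> \<int>" using vals[OF i] cxb_int[OF i] cxb_int[OF k] by auto
  qed
  moreover have "lex_less c xb v" unfolding lex_less_iff
    using k v unfolding Pk_def by (intro bexI[of _ k]) auto
  ultimately show ?thesis unfolding SsetD lex_le_def by blast
qed

definition Wset where "Wset = {v. \<exists>k\<in>{1..<lead_idx c xb}. Pk k v}"

lemma W_sub: "Wset \<subseteq> Sset c xb"
  unfolding Wset_def using Pk_S lead(1) by fastforce

lemma W_fin: "finite Wset"
proof -
  have "Wset \<subseteq> (\<lambda>k. THE v. Pk k v) ` {1..<lead_idx c xb}"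
  proof
    fix v assume "v \<in> Wset"
    then obtain k where k: "k \<in> {1..<lead_idx c xb}" "Pk k v" unfolding Wset_def by blast
    have "k \<in> {1..CARD('n)}" using k(1) lead(1) by auto
    then have "v = (THE v. Pk k v)" using Pk_ex1 k(2) by (simp add: the1_equality)
    then show "v \<in> (\<lambda>k. THE v. Pk k v) ` {1..<lead_idx c xb}" using k(1) by blast
  qed
  then show ?thesis by (rule finite_subset) simp
qed

lemma cover: "\<forall>s\<in>Sset c xb. \<exists>v\<in>insert xb Wset. s - v \<in> coneK c"
proof
  fix s assume s: "s \<in> Sset c xb"
  then have sK: "s \<in> coneK c" and si: "int_vec s" and sl: "lex_le c xb s" unfolding SsetD by auto
  show "\<exists>v\<in>insert xb Wset. s - v \<in> coneK c"
  proof (cases "s = xb")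
    case True then show ?thesis using coneK_0 by auto
  next
    case False
    then obtain i where i: "i \<in> {1..CARD('n)}" "\<forall>j\<in>{1..<i}. c j \<bullet> xb = c j \<bullet> s" "c i \<bullet> xb < c i \<bullet> s"
      using sl unfolding lex_le_def lex_less_iff by blast
    show ?thesis
    proof (cases "i < lead_idx c xb")
      case True
      obtain v where v: "Pk i v" using Pk_ex1[OF i(1)] by blast
      have "v \<in> Wset" unfolding Wset_def using v True i(1) by auto
      moreover have "s - v \<in> coneK c" unfolding coneK_def
      proof (intro CollectI ballI)
        fix j assume j: "j \<in> {1..CARD('n)}"
        consider "j < i" | "j = i" | "i < j" by linarith
        then show "0 \<le> c j \<bullet> (s - v)"
        proof cases
          case 1 then show ?thesis using v i(2) j unfolding Pk_def by (simp add: inner_diff_right)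
        next
          case 2
          have "c i \<bullet> xb + 1 \<le> c i \<bullet> s"
            using int_lt[OF cxb_int[OF i(1)] int_inner[OF c_int[OF i(1)] si] i(3)] .
          then show ?thesis using 2 v unfolding Pk_def by (simp add: inner_diff_right)
        next
          case 3 then show ?thesis using v sK j unfolding Pk_def coneK_def by (simp add: inner_diff_right)
        qed
      qed
      ultimately show ?thesis by blast
    next
      case False
      have "s - xb \<in> coneK c" unfolding coneK_def
      proof (intro CollectI ballI)
        fix j assume j: "j \<in> {1..CARD('n)}"
        consider "j < i" | "j = i" | "i < j" by linarith
        then show "0 \<le> c j \<bullet> (s - xb)"
        proof cases
          case 1 then show ?thesis using i(2) j by (simp add: inner_diff_right)
        next
          case 2 then show ?thesis using i(3) by (simp add: inner_diff_right)
        next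
          case 3
          then have "c j \<bullet> xb = 0" using lead(3)[OF j] False by simp
          then show ?thesis using sK j unfolding coneK_def by (simp add: inner_diff_right)
        qed
      qed
      then show ?thesis by blast
    qed
  qed
qed

lemma V_sub_Q: "insert xb Wset \<subseteq> Qset c xb"
  unfolding QEq' using xbS' W_sub by (auto intro: hull_inc)

lemma xb_ext: "xb extreme_point_of Qset c xb"
  unfolding QEq'
proof (rule lex_extreme[where F = c and m = "CARD('n)"])
  show "xb \<in> convex hull Sset c xb" using xbS' by (rule hull_inc)
  show "\<forall>s\<in>Sset c xb. s \<noteq> xb \<longrightarrow> (\<exists>i\<in>{1..CARD('n)}. (\<forall>j\<in>{1..<i}. c j \<bullet> (s - xb) = 0) \<and> 0 < c i \<bullet> (s - xb))"
  proof (intro ballI impI)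
    fix s assume "s \<in> Sset c xb" "s \<noteq> xb"
    then obtain i where i: "i \<in> {1..CARD('n)}" "\<forall>j\<in>{1..<i}. c j \<bullet> xb = c j \<bullet> s" "c i \<bullet> xb < c i \<bullet> s"
      unfolding SsetD lex_le_def lex_less_iff by blast
    then show "\<exists>i\<in>{1..CARD('n)}. (\<forall>j\<in>{1..<i}. c j \<bullet> (s - xb) = 0) \<and> 0 < c i \<bullet> (s - xb)"
      by (intro bexI[of _ i]) (auto simp: inner_diff_right)
  qed
qed

end

context
  fixes c :: "nat \<Rightarrow> real^'n" and xb :: "real^'n"
  assumes lb: "lattice_basis c" and xbK: "xb \<in> coneK c" and xbi: "int_vec xb" and xb0: "xb \<noteq> 0"
begin

lemmas SsetD2 = Sset_def[OF lb xbK xbi]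
lemmas lead2 = lead[OF lb xbK xbi xb0]
lemmas PkD = Pk_def[OF lb xbK xbi xb0]

lemma vk_ext:
  assumes k: "k \<in> {1..<lead_idx c xb}" and v: "Pk c xb k v"
  shows "v extreme_point_of Qset c xb"
  unfolding Q_eq[OF lb xbK xbi]
proof -
  define n where "n = CARD('n)"
  define F where "F j = (if j < k then c j else if j < n then c (Suc j) else c k)" for j
  have kn: "1 \<le> k" "k < n" using k lead2(1) unfolding n_def by auto
  have vS: "v \<in> Sset c xb" using Pk_S[OF lb xbK xbi xb0 _ v] kn unfolding n_def by auto
  have vv: "\<forall>i\<in>{1..<k}. c i \<bullet> v = c i \<bullet> xb" "c k \<bullet> v = c k \<bullet> xb + 1"
     "\<forall>i\<in>{k<..n}. c i \<bullet> v = 0" using v unfolding PkD n_def by auto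
  show "v extreme_point_of convex hull Sset c xb"
  proof (rule lex_extreme[where F = F and m = n])
    show "v \<in> convex hull Sset c xb" using vS by (rule hull_inc)
    show "\<forall>s\<in>Sset c xb. s \<noteq> v \<longrightarrow> (\<exists>i\<in>{1..n}. (\<forall>j\<in>{1..<i}. F j \<bullet> (s - v) = 0) \<and> 0 < F i \<bullet> (s - v))"
    proof (intro ballI impI)
      fix s assume s: "s \<in> Sset c xb" "s \<noteq> v"
      then have sK: "s \<in> coneK c" and si: "int_vec s" and sl: "lex_le c xb s" unfolding SsetD2 by auto
      have sK': "0 \<le> c j \<bullet> s" if "j \<in> {1..n}" for j using sK that unfolding coneK_def n_def by blast
      have ex: "\<exists>i. i \<in> {1..n} \<and> F i \<bullet> (s - v) \<noteq> 0"
      proof (rule ccontr)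
        assume "\<not> ?thesis"
        then have z: "F i \<bullet> (s - v) = 0" if "i \<in> {1..n}" for i using that by blast
        have "\<forall>i\<in>{1..CARD('n)}. c i \<bullet> s = c i \<bullet> v"
        proof
          fix i assume i: "i \<in> {1..CARD('n)}"
          consider "i < k" | "i = k" | "k < i" by linarith
          then show "c i \<bullet> s = c i \<bullet> v"
          proof cases
            case 1 then show ?thesis using z[of i] i kn unfolding F_def n_def by (simp add: inner_diff_right)
          next
            case 2 then show ?thesis using z[of n] kn unfolding F_def by (simp add: inner_diff_right)
          next
            case 3
            then have "F (i - 1) = c i" using i kn unfolding F_def n_def by auto
            moreover have "i - 1 \<in> {1..n}" using 3 i kn unfolding n_def by auto
            ultimately show ?thesis using z[of "i - 1"] by (simp add: inner_diff_right)
          qed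
        qed
        then have "s = v" by (rule inj_y[OF lb])
        then show False using s(2) by simp
      qed
      define i0 where "i0 = (LEAST i. i \<in> {1..n} \<and> F i \<bullet> (s - v) \<noteq> 0)"
      have i0: "i0 \<in> {1..n}" "F i0 \<bullet> (s - v) \<noteq> 0"
        using LeastI_ex[OF ex] unfolding i0_def by auto
      have below: "F j \<bullet> (s - v) = 0" if "j \<in> {1..<i0}" for j
      proof (rule ccontr)
        assume "F j \<bullet> (s - v) \<noteq> 0"
        then have "i0 \<le> j" unfolding i0_def using that i0 by (intro Least_le) auto
        then show False using that by auto
      qed
      have "0 \<le> F i0 \<bullet> (s - v)"
      proof -
        consider "i0 < k" | "k \<le> i0" "i0 < n" | "i0 = n" using i0(1) by force
        then show ?thesis
        proof cases
          case 1
          have "\<forall>j\<in>{1..<i0}. c j \<bullet> s = c j \<bullet> xb"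
          proof
            fix j assume j: "j \<in> {1..<i0}"
            then have "c j \<bullet> (s - v) = 0" using below[OF j] 1 unfolding F_def by simp
            then show "c j \<bullet> s = c j \<bullet> xb" using vv(1) j 1 by (simp add: inner_diff_right)
          qed
          then have "c i0 \<bullet> xb \<le> c i0 \<bullet> s" using lexge_step[OF sl] i0(1) unfolding n_def by blast
          then show ?thesis using 1 vv(1) i0(1) unfolding F_def by (simp add: inner_diff_right)
        next
          case 2
          then have "Suc i0 \<in> {k<..n}" by auto
          then have "c (Suc i0) \<bullet> v = 0" "0 \<le> c (Suc i0) \<bullet> s" using vv(3) sK' by auto
          then show ?thesis using 2 unfolding F_def by (simp add: inner_diff_right)
        next
          case 3
          have lo: "c j \<bullet> s = c j \<bullet> xb" if "j \<in> {1..<k}" for j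
          proof -
            have "j \<in> {1..<i0}" using that 3 kn by auto
            then have "c j \<bullet> (s - v) = 0" using below that unfolding F_def by force
            then show ?thesis using vv(1) that by (simp add: inner_diff_right)
          qed
          have hi: "c j \<bullet> s = 0" if "j \<in> {k<..n}" for j
          proof -
            have "j - 1 \<in> {1..<i0}" using that 3 kn by auto
            moreover have "F (j - 1) = c j" using that kn unfolding F_def by auto
            ultimately have "c j \<bullet> (s - v) = 0" using below by force
            then show ?thesis using vv(3) that by (simp add: inner_diff_right)
          qed
          have "c k \<bullet> xb + 1 \<le> c k \<bullet> s"
          proof (cases "s = xb")
            case True
            have "lead_idx c xb \<in> {k<..n}" using k lead2(1) unfolding n_def by auto
            then have "c (lead_idx c xb) \<bullet> xb = 0" using hi True by simp
            then show ?thesis using lead2(2) by simp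
          next
            case False
            then obtain m where m: "m \<in> {1..CARD('n)}" "\<forall>j\<in>{1..<m}. c j \<bullet> xb = c j \<bullet> s" "c m \<bullet> xb < c m \<bullet> s"
              using sl unfolding lex_le_def lex_less_iff by blast
            consider "m < k" | "m = k" | "k < m" by linarith
            then show ?thesis
            proof cases
              case 1 then show ?thesis using lo[of m] m by auto
            next
              case 2
              have kI: "k \<in> {1..CARD('n)}" using kn unfolding n_def by auto
              show ?thesis using int_lt[OF cxb_int[OF lb xbK xbi xb0 kI] int_inner[OF c_int[OF lb xbK xbi xb0 kI] si]] m 2 by simp
            next
              case 3
              then have "c m \<bullet> s = 0" using hi m(1) unfolding n_def by auto
              moreover have "0 \<le> c m \<bullet> xb" using cxb_nn[OF lb xbK xbi xb0 m(1)] .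
              ultimately show ?thesis using m(3) by simp
            qed
          qed
          then show ?thesis using 3 kn vv(2) unfolding F_def by (simp add: inner_diff_right)
        qed
      qed
      then have "0 < F i0 \<bullet> (s - v)" using i0(2) by linarith
      then show "\<exists>i\<in>{1..n}. (\<forall>j\<in>{1..<i}. F j \<bullet> (s - v) = 0) \<and> 0 < F i \<bullet> (s - v)"
        using i0(1) below by blast
    qed
  qed
qed

end

theorem lemma3:
  fixes c :: "nat \<Rightarrow> real^'n" and xb :: "real^'n"
  assumes "lattice_basis c"
    and "xb \<in> coneK c" and "int_vec xb"
  shows "rec_cone (Qset c xb) = coneK c \<and> polyhedron (Qset c xb)
         \<and> aff_dim (Qset c xb) = int CARD('n)
         \<and> (xb \<noteq> 0 \<longrightarrow>
             (\<forall>k\<in>{1..<lead_idx c xb}. \<exists>!v.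
                (\<forall>i\<in>{1..<k}. c i \<bullet> v = c i \<bullet> xb) \<and> c k \<bullet> v = c k \<bullet> xb + 1
                \<and> (\<forall>i\<in>{k<..CARD('n)}. c i \<bullet> v = 0))
           \<and> {x. x extreme_point_of (Qset c xb)} =
               insert xb {v. \<exists>k\<in>{1..<lead_idx c xb}.
                (\<forall>i\<in>{1..<k}. c i \<bullet> v = c i \<bullet> xb) \<and> c k \<bullet> v = c k \<bullet> xb + 1
                \<and> (\<forall>i\<in>{k<..CARD('n)}. c i \<bullet> v = 0)})"
proof -
  note a = assms
  have r: "rec_cone (Qset c xb) = coneK c" by (rule rec_eq[OF a])
  have af: "aff_dim (Qset c xb) = int CARD('n)" by (rule aff_full[OF a])
  have p: "polyhedron (Qset c xb)"
  proof (cases "xb = 0")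
    case True
    have "\<forall>s\<in>Sset c xb. \<exists>v\<in>{xb}. s - v \<in> coneK c"
      using True unfolding Sset_def[OF a] by auto
    moreover have "{xb} \<subseteq> Qset c xb" using xb_Q[OF a] by simp
    ultimately show ?thesis using poly[OF a, of "{xb}"] by simp
  next
    case False
    have "finite (insert xb (Wset c xb))" using W_fin[OF a False] by simp
    then show ?thesis using poly[OF a _ V_sub_Q[OF a False] cover[OF a False]] by blast
  qed
  have e: "(\<forall>k\<in>{1..<lead_idx c xb}. \<exists>!v.
                (\<forall>i\<in>{1..<k}. c i \<bullet> v = c i \<bullet> xb) \<and> c k \<bullet> v = c k \<bullet> xb + 1
                \<and> (\<forall>i\<in>{k<..CARD('n)}. c i \<bullet> v = 0))
           \<and> {x. x extreme_point_of (Qset c xb)} =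
               insert xb {v. \<exists>k\<in>{1..<lead_idx c xb}.
                (\<forall>i\<in>{1..<k}. c i \<bullet> v = c i \<bullet> xb) \<and> c k \<bullet> v = c k \<bullet> xb + 1
                \<and> (\<forall>i\<in>{k<..CARD('n)}. c i \<bullet> v = 0)}" if xb0: "xb \<noteq> 0"
  proof
    note PkD = Pk_def[OF a xb0]
    show "\<forall>k\<in>{1..<lead_idx c xb}. \<exists>!v.
                (\<forall>i\<in>{1..<k}. c i \<bullet> v = c i \<bullet> xb) \<and> c k \<bullet> v = c k \<bullet> xb + 1
                \<and> (\<forall>i\<in>{k<..CARD('n)}. c i \<bullet> v = 0)"
    proof
      fix k assume k: "k \<in> {1..<lead_idx c xb}"
      then have "k \<in> {1..CARD('n)}" using lead(1)[OF a xb0] by auto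
      then show "\<exists>!v. (\<forall>i\<in>{1..<k}. c i \<bullet> v = c i \<bullet> xb) \<and> c k \<bullet> v = c k \<bullet> xb + 1
                \<and> (\<forall>i\<in>{k<..CARD('n)}. c i \<bullet> v = 0)"
        using Pk_ex1[OF a xb0] unfolding PkD by blast
    qed
    have W: "Wset c xb = {v. \<exists>k\<in>{1..<lead_idx c xb}.
                (\<forall>i\<in>{1..<k}. c i \<bullet> v = c i \<bullet> xb) \<and> c k \<bullet> v = c k \<bullet> xb + 1
                \<and> (\<forall>i\<in>{k<..CARD('n)}. c i \<bullet> v = 0)}"
      unfolding Wset_def[OF a xb0] PkD ..
    have "{x. x extreme_point_of (Qset c xb)} = insert xb (Wset c xb)"
    proof
      show "{x. x extreme_point_of Qset c xb} \<subseteq> insert xb (Wset c xb)"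
        using ext_sub[OF a V_sub_Q[OF a xb0] cover[OF a xb0]] by blast
      show "insert xb (Wset c xb) \<subseteq> {x. x extreme_point_of Qset c xb}"
      proof
        fix x assume "x \<in> insert xb (Wset c xb)"
        then consider "x = xb" | k where "k \<in> {1..<lead_idx c xb}" "Pk c xb k x"
          unfolding Wset_def[OF a xb0] by blast
        then show "x \<in> {x. x extreme_point_of Qset c xb}"
        proof cases
          case 1 then show ?thesis using xb_ext[OF a xb0] by simp
        next
          case 2 then show ?thesis using vk_ext[OF a xb0] by blast
        qed
      qed
    qed
    then show "{x. x extreme_point_of (Qset c xb)} =
               insert xb {v. \<exists>k\<in>{1..<lead_idx c xb}.
                (\<forall>i\<in>{1..<k}. c i \<bullet> v = c i \<bullet> xb) \<and> c k \<bullet> v = c k \<bullet> xb + 1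
                \<and> (\<forall>i\<in>{k<..CARD('n)}. c i \<bullet> v = 0)}" using W by simp
  qed
  show ?thesis using r p af e by blast
qed

end
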